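(* Let $\mathbf{A}$ be a finite idempotent algebra and $B$ a subuniverse of $\mathbf{A}$. Then $B$ Jónsson absorbs $\mathbf{A}$ if and only if for all $a,c,d\in A$ and all $b_1,b_2\in B$, the digraph $(A,E)$ with edge set $E=\{(u,v)\in A^2 : \exists b\in B,\ (b,u,v)\in R\}$, where $R$ is the subuniverse of $\mathbf{A}^3$ generated by $(b_1,a,a)$, $(b_2,c,c)$, $(d,a,c)$, contains a directed path from $a$ to $c$.
   Context: Jónsson absorption: a subuniverse $B$ of $\mathbf{A}$ Jónsson absorbs $\mathbf{A}$ if there are ternary terms $d_0,\dots,d_n$ of $\mathbf{A}$ such that $d_i(b,a,b')\in B$ for all $i$, all $b,b'\in B$, $a\in A$; $d_i(x,y,y)=d_{i+1}(x,x,y)$ for all $i<n$ and all $x,y\in A$; $d_0(x,y,z)=x$ and $d_n(x,y,z)=z$. An algebra is idempotent if every basic operation $f$ satisfies $f(x,\dots,x)\approx x$. *)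

theory Defs
  imports Main
begin

text \<open>An algebra is given by a carrier set A and a set F of basic operations,
  each a pair (n, f) of an arity n and a function f acting on argument lists of length n.\<close>

type_synonym 'a ops = "(nat \<times> ('a list \<Rightarrow> 'a)) set"

definition is_algebra :: "'a set \<Rightarrow> 'a ops \<Rightarrow> bool" where
  "is_algebra A F \<longleftrightarrow>
     (\<forall>(n, f) \<in> F. \<forall>xs. length xs = n \<and> set xs \<subseteq> A \<longrightarrow> f xs \<in> A)"

definition idempotent_alg :: "'a set \<Rightarrow> 'a ops \<Rightarrow> bool" where
  "idempotent_alg A F \<longleftrightarrow> (\<forall>(n, f) \<in> F. \<forall>x \<in> A. f (replicate n x) = x)"

definition subuniverse :: "'a set \<Rightarrow> 'a ops \<Rightarrow> 'a set \<Rightarrow> bool" where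
  "subuniverse A F B \<longleftrightarrow> B \<subseteq> A \<and>
     (\<forall>(n, f) \<in> F. \<forall>xs. length xs = n \<and> set xs \<subseteq> B \<longrightarrow> f xs \<in> B)"

definition subuniverse3 :: "'a set \<Rightarrow> 'a ops \<Rightarrow> ('a \<times> 'a \<times> 'a) set \<Rightarrow> bool" where
  "subuniverse3 A F R \<longleftrightarrow> R \<subseteq> A \<times> A \<times> A \<and>
     (\<forall>(n, f) \<in> F. \<forall>rs. length rs = n \<and> set rs \<subseteq> R \<longrightarrow>
        (f (map fst rs), f (map (fst \<circ> snd) rs), f (map (snd \<circ> snd) rs)) \<in> R)"

definition Sg3 :: "'a set \<Rightarrow> 'a ops \<Rightarrow> ('a \<times> 'a \<times> 'a) set \<Rightarrow> ('a \<times> 'a \<times> 'a) set" where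
  "Sg3 A F G = \<Inter> {R. subuniverse3 A F R \<and> G \<subseteq> R}"

inductive_set term_ops :: "'a ops \<Rightarrow> nat \<Rightarrow> ('a list \<Rightarrow> 'a) set" for F k where
  proj: "i < k \<Longrightarrow> (\<lambda>xs. xs ! i) \<in> term_ops F k"
| app: "(n, f) \<in> F \<Longrightarrow> length gs = n \<Longrightarrow> \<forall>g\<in>set gs. g \<in> term_ops F k \<Longrightarrow>
          (\<lambda>xs. f (map (\<lambda>g. g xs) gs)) \<in> term_ops F k"

definition jonsson_absorbs :: "'a set \<Rightarrow> 'a ops \<Rightarrow> 'a set \<Rightarrow> bool" where
  "jonsson_absorbs A F B \<longleftrightarrow>
     (\<exists>(n::nat) (d :: nat \<Rightarrow> 'a list \<Rightarrow> 'a).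
        (\<forall>i\<le>n. d i \<in> term_ops F 3) \<and>
        (\<forall>i\<le>n. \<forall>b\<in>B. \<forall>a\<in>A. \<forall>b'\<in>B. d i [b, a, b'] \<in> B) \<and>
        (\<forall>i<n. \<forall>x\<in>A. \<forall>y\<in>A. d i [x, y, y] = d (Suc i) [x, x, y]) \<and>
        (\<forall>x\<in>A. \<forall>y\<in>A. \<forall>z\<in>A. d 0 [x, y, z] = x \<and> d n [x, y, z] = z))"

definition edgeE :: "'a set \<Rightarrow> 'a ops \<Rightarrow> 'a set \<Rightarrow> 'a \<Rightarrow> 'a \<Rightarrow> 'a \<Rightarrow> 'a \<Rightarrow> 'a \<Rightarrow> ('a \<times> 'a) set" where
  "edgeE A F B a c d b1 b2 =
     {(u, v). u \<in> A \<and> v \<in> A \<and>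
        (\<exists>b\<in>B. (b, u, v) \<in> Sg3 A F {(b1, a, a), (b2, c, c), (d, a, c)})}"

end

theory Submission
  imports Defs
begin

definition comp3 :: "('a list \<Rightarrow> 'a) \<Rightarrow> ('a list \<Rightarrow> 'a) \<Rightarrow> ('a list \<Rightarrow> 'a) \<Rightarrow> ('a list \<Rightarrow> 'a) \<Rightarrow> ('a list \<Rightarrow> 'a)" where
  "comp3 t f g h = (\<lambda>xs. t [f xs, g xs, h xs])"

definition pr :: "nat \<Rightarrow> 'a list \<Rightarrow> 'a" where "pr i = (\<lambda>xs. xs ! i)"

lemma comp3_eval[simp]: "comp3 t f g h xs = t [f xs, g xs, h xs]"
  by (simp add: comp3_def)

lemma pr_eval[simp]: "pr 0 [x,y,z] = x" "pr (Suc 0) [x,y,z] = y" "pr 1 [x,y,z] = y" "pr 2 [x,y,z] = z"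
  by (simp_all add: pr_def)

lemma term_ops_compose:
  assumes "t \<in> term_ops F k" "\<forall>g\<in>set gs. g \<in> term_ops F m" "length gs = k"
  shows "(\<lambda>xs. t (map (\<lambda>g. g xs) gs)) \<in> term_ops F m"
  using assms
proof (induction t rule: term_ops.induct)
  case (proj i)
  then have "(\<lambda>xs. map (\<lambda>g. g xs) gs ! i) = gs ! i" by auto
  then show ?case using proj by auto
next
  case (app n f hs)
  let ?hs = "map (\<lambda>h. \<lambda>xs. h (map (\<lambda>g. g xs) gs)) hs"
  have "(\<lambda>xs. f (map (\<lambda>g. g xs) ?hs)) \<in> term_ops F m"
    apply (rule term_ops.app[OF app(1)])
    using app by auto
  moreover have "(\<lambda>xs. f (map (\<lambda>g. g xs) ?hs)) = (\<lambda>xs. f (map (\<lambda>h. h (map (\<lambda>g. g xs) gs)) hs))"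
    by (simp add: o_def)
  ultimately show ?case by simp
qed

lemma pr_T3: "i < 3 \<Longrightarrow> pr i \<in> term_ops F 3"
  unfolding pr_def by (rule term_ops.proj)

lemma comp3_T3:
  assumes "t \<in> term_ops F 3" "f \<in> term_ops F 3" "g \<in> term_ops F 3" "h \<in> term_ops F 3"
  shows "comp3 t f g h \<in> term_ops F 3"
proof -
  have "(\<lambda>xs. t (map (\<lambda>g. g xs) [f,g,h])) \<in> term_ops F 3"
    by (rule term_ops_compose[OF assms(1)]) (use assms in auto)
  then show ?thesis by (simp add: comp3_def[abs_def])
qed

lemma term_ops_closed:
  assumes "t \<in> term_ops F k"
    and cl: "\<forall>(n, f) \<in> F. \<forall>xs. length xs = n \<and> set xs \<subseteq> C \<longrightarrow> f xs \<in> C"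
  shows "length xs = k \<Longrightarrow> set xs \<subseteq> C \<Longrightarrow> t xs \<in> C"
  using assms(1)
proof (induction t rule: term_ops.induct)
  case (proj i) then show ?case by auto
next
  case (app n f gs)
  have H: "\<forall>ys. length ys = n \<and> set ys \<subseteq> C \<longrightarrow> f ys \<in> C"
    using bspec[OF cl app(1)] by simp
  have "set (map (\<lambda>g. g xs) gs) \<subseteq> C" using app by auto
  then show ?case using H app(2) by simp
qed

lemma term_ops_idem:
  assumes "t \<in> term_ops F k" "idempotent_alg A F" "x \<in> A"
  shows "t (replicate k x) = x"
  using assms(1)
proof (induction t rule: term_ops.induct)
  case (proj i) then show ?case by simp
next
  case (app n f gs)
  have "map (\<lambda>g. g (replicate k x)) gs = replicate n x"
  proof -
    have "map (\<lambda>g. g (replicate k x)) gs = map (\<lambda>_. x) gs"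
      by (rule map_cong) (use app in auto)
    then show ?thesis using app(2) by (simp add: map_replicate_const)
  qed
  moreover have "\<forall>y\<in>A. f (replicate n y) = y"
    using bspec[OF assms(2)[unfolded idempotent_alg_def] app(1)] by simp
  ultimately show ?case using assms(3) by simp
qed


locale js =
  fixes A :: "'a set" and F :: "'a ops" and B :: "'a set"
  assumes alg: "is_algebra A F" and finA: "finite A" and idem: "idempotent_alg A F"
    and sub: "subuniverse A F B"
begin

abbreviation T3 where "T3 \<equiv> term_ops F 3"

lemma prT[simp]: "pr 0 \<in> T3" "pr 1 \<in> T3" "pr 2 \<in> T3" by (simp_all add: pr_T3)

lemma BA: "B \<subseteq> A" using sub unfolding subuniverse_def by simp

lemma T3_A: "t \<in> T3 \<Longrightarrow> x \<in> A \<Longrightarrow> y \<in> A \<Longrightarrow> z \<in> A \<Longrightarrow> t [x,y,z] \<in> A"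
  using term_ops_closed[of t F 3 A "[x,y,z]"] alg unfolding is_algebra_def by simp

lemma T3_B: "t \<in> T3 \<Longrightarrow> x \<in> B \<Longrightarrow> y \<in> B \<Longrightarrow> z \<in> B \<Longrightarrow> t [x,y,z] \<in> B"
  using term_ops_closed[of t F 3 B "[x,y,z]"] sub unfolding subuniverse_def by simp

lemma T3_idem: "t \<in> T3 \<Longrightarrow> x \<in> A \<Longrightarrow> t [x,x,x] = x"
  using term_ops_idem[of t F 3 A x] idem by (simp add: numeral_3_eq_3)

definition absorb :: "('a list \<Rightarrow> 'a) \<Rightarrow> bool" where
  "absorb t \<longleftrightarrow> (\<forall>b\<in>B. \<forall>x\<in>A. \<forall>b'\<in>B. t [b,x,b'] \<in> B)"

definition Dabs1 :: "'a \<Rightarrow> 'a \<Rightarrow> ('a \<times> 'a) set" where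
  "Dabs1 al ga = {(t [al,al,ga], t [al,ga,ga]) | t. t \<in> T3 \<and> absorb t}"

definition DQ :: "('a \<times> 'a \<times> 'a) list \<Rightarrow> 'a \<Rightarrow> 'a \<Rightarrow> ('a \<times> 'a) set" where
  "DQ Q al ga = {(t [al,al,ga], t [al,ga,ga]) | t. t \<in> T3 \<and>
      (\<forall>q\<in>set Q. t [fst q, fst (snd q), snd (snd q)] \<in> B)}"

definition Dv :: "('i \<Rightarrow> 'a) \<Rightarrow> ('i \<Rightarrow> 'a) \<Rightarrow> (('i \<Rightarrow> 'a) \<times> ('i \<Rightarrow> 'a)) set" where
  "Dv a c = {(\<lambda>k. t [a k, a k, c k], \<lambda>k. t [a k, c k, c k]) | t. t \<in> T3 \<and> absorb t}"

definition Sg1 :: "'a \<Rightarrow> 'a \<Rightarrow> 'a set" where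
  "Sg1 al ga = {t [al,al,ga] | t. t \<in> T3}"

lemma absorb_pr0: "absorb (pr 0)" unfolding absorb_def by simp
lemma absorb_pr2: "absorb (pr 2)" unfolding absorb_def by simp

lemma M:
  assumes hyp: "\<And>al ga d b1 b2. al \<in> A \<Longrightarrow> ga \<in> A \<Longrightarrow> d \<in> A \<Longrightarrow> b1 \<in> B \<Longrightarrow> b2 \<in> B \<Longrightarrow>
        (al, ga) \<in> (DQ [(b1,d,b2)] al ga)\<^sup>*"
  shows "set Q \<subseteq> B \<times> A \<times> B \<Longrightarrow> al \<in> A \<Longrightarrow> ga \<in> A \<Longrightarrow> (al, ga) \<in> (DQ Q al ga)\<^sup>*"
proof (induction Q arbitrary: al ga rule: length_induct)
  case (1 Q)
  show ?case
  proof (cases Q)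
    case Nil
    have "(al, ga) \<in> DQ Q al ga" unfolding DQ_def Nil
      using pr_T3[of 1 F] by (auto intro!: exI[of _ "pr 1"])
    then show ?thesis by (rule r_into_rtrancl)
  next
    case (Cons q Q0)
    obtain b1 x0 b2 where q: "q = (b1,x0,b2)" by (cases q) auto
    have qin: "b1 \<in> B" "x0 \<in> A" "b2 \<in> B" using "1.prems"(1) Cons q by auto
    have Q0in: "set Q0 \<subseteq> B \<times> A \<times> B" using "1.prems"(1) Cons by auto
    have base: "(al, ga) \<in> (DQ [q] al ga)\<^sup>*" using hyp qin "1.prems" q by simp
    have sub: "DQ [q] al ga \<subseteq> (DQ Q al ga)\<^sup>*"
    proof
      fix e assume "e \<in> DQ [q] al ga"
      then obtain s where e: "e = (s [al,al,ga], s [al,ga,ga])" "s \<in> T3" "s [b1,x0,b2] \<in> B"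
        by (auto simp: DQ_def q)
      define u where "u = s [al,al,ga]"
      define v where "v = s [al,ga,ga]"
      have uA: "u \<in> A" "v \<in> A" using T3_A e(2) "1.prems" u_def v_def by auto
      define Fs where "Fs = (\<lambda>p::'a\<times>'a\<times>'a. (s [fst p, fst p, snd (snd p)],
          s [fst p, fst (snd p), snd (snd p)], s [fst p, snd (snd p), snd (snd p)]))"
      define Q1 where "Q1 = map Fs Q0"
      have Q1in: "set Q1 \<subseteq> B \<times> A \<times> B"
      proof
        fix p assume "p \<in> set Q1"
        then obtain p0 where p0: "p0 \<in> set Q0" "p = Fs p0" unfolding Q1_def by auto
        then have "fst p0 \<in> B" "fst (snd p0) \<in> A" "snd (snd p0) \<in> B" using Q0in by auto
        moreover have "fst p0 \<in> A" "snd (snd p0) \<in> A" using calculation BA by auto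
        ultimately show "p \<in> B \<times> A \<times> B" using p0 T3_A T3_B e(2) unfolding Fs_def by auto
      qed
      have "length Q1 < length Q" unfolding Q1_def Cons by simp
      then have IH: "(u, v) \<in> (DQ Q1 u v)\<^sup>*" using "1.IH" Q1in uA by blast
      have "DQ Q1 u v \<subseteq> DQ Q al ga"
      proof
        fix e' assume "e' \<in> DQ Q1 u v"
        then obtain r where r: "e' = (r [u,u,v], r [u,v,v])" "r \<in> T3"
            "\<forall>q\<in>set Q1. r [fst q, fst (snd q), snd (snd q)] \<in> B"
          by (auto simp: DQ_def)
        define T where "T = comp3 r (comp3 s (pr 0) (pr 0) (pr 2)) s (comp3 s (pr 0) (pr 2) (pr 2))"
        have TT: "T \<in> T3" unfolding T_def using r(2) e(2)
          by (intro comp3_T3 prT) auto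
        have T1: "T [al,al,ga] = r [u,u,v]" "T [al,ga,ga] = r [u,v,v]"
          unfolding T_def u_def v_def by simp_all
        have Tq: "\<forall>p\<in>set Q. T [fst p, fst (snd p), snd (snd p)] \<in> B"
        proof
          fix p assume "p \<in> set Q"
          then consider "p = q" | "p \<in> set Q0" using Cons by auto
          then show "T [fst p, fst (snd p), snd (snd p)] \<in> B"
          proof cases
            case 1
            have "s [b1,b1,b2] \<in> B" "s [b1,b2,b2] \<in> B" using T3_B e(2) qin by auto
            then show ?thesis using 1 q T3_B r(2) e(3) unfolding T_def by simp
          next
            case 2
            then have "Fs p \<in> set Q1" unfolding Q1_def by simp
            then show ?thesis using r(3) unfolding T_def Fs_def by auto
          qed
        qed
        show "e' \<in> DQ Q al ga" unfolding DQ_def using TT T1 Tq r(1)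
          by (auto intro!: exI[of _ T])
      qed
      then have "(u, v) \<in> (DQ Q al ga)\<^sup>*" using IH rtrancl_mono by blast
      then show "e \<in> (DQ Q al ga)\<^sup>*" using e(1) u_def v_def by simp
    qed
    show ?thesis using base rtrancl_subset_rtrancl[OF sub] by blast
  qed
qed

end


context js
begin

lemma Dv_T1:
  assumes q: "q \<in> T3" and aA: "\<forall>k. a k \<in> A" and cA: "\<forall>k. c k \<in> A"
  shows "Dv a (\<lambda>k. q [a k, a k, c k]) \<subseteq> Dv a c"
proof
  fix e assume "e \<in> Dv a (\<lambda>k. q [a k, a k, c k])"
  then obtain s where s: "s \<in> T3" "absorb s"
    "e = (\<lambda>k. s [a k, a k, q [a k, a k, c k]], \<lambda>k. s [a k, q [a k, a k, c k], q [a k, a k, c k]])"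
    unfolding Dv_def by blast
  define T where "T = comp3 s (pr 0) (comp3 q (pr 0) (pr 0) (pr 1)) (comp3 q (pr 0) (pr 0) (pr 2))"
  have TT: "T \<in> T3" unfolding T_def using s q by (intro comp3_T3 prT) auto
  have Tabs: "absorb T" unfolding absorb_def
  proof (intro ballI)
    fix b x b' assume "b \<in> B" "x \<in> A" "b' \<in> B"
    moreover have "b \<in> A" using \<open>b \<in> B\<close> BA by auto
    ultimately have "q [b,b,x] \<in> A" "q [b,b,b'] \<in> B" using T3_A T3_B q by auto
    then show "T [b,x,b'] \<in> B" using s(2) \<open>b \<in> B\<close> unfolding T_def absorb_def by simp
  qed
  have "e = (\<lambda>k. T [a k, a k, c k], \<lambda>k. T [a k, c k, c k])"
    using s(3) unfolding T_def using T3_idem[OF q] aA by simp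
  then show "e \<in> Dv a c" unfolding Dv_def using TT Tabs by blast
qed

lemma Dv_T2:
  assumes q: "q \<in> T3" and aA: "\<forall>k. a k \<in> A" and cA: "\<forall>k. c k \<in> A"
  shows "Dv (\<lambda>k. q [a k, a k, c k]) c \<subseteq> Dv a c"
proof
  fix e assume "e \<in> Dv (\<lambda>k. q [a k, a k, c k]) c"
  then obtain s where s: "s \<in> T3" "absorb s"
    "e = (\<lambda>k. s [q [a k, a k, c k], q [a k, a k, c k], c k], \<lambda>k. s [q [a k, a k, c k], c k, c k])"
    unfolding Dv_def by blast
  define T where "T = comp3 s (comp3 q (pr 0) (pr 0) (pr 2)) (comp3 q (pr 1) (pr 1) (pr 2)) (pr 2)"
  have TT: "T \<in> T3" unfolding T_def using s q by (intro comp3_T3 prT) auto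
  have Tabs: "absorb T" unfolding absorb_def
  proof (intro ballI)
    fix b x b' assume "b \<in> B" "x \<in> A" "b' \<in> B"
    moreover have "b' \<in> A" using \<open>b' \<in> B\<close> BA by auto
    ultimately have "q [x,x,b'] \<in> A" "q [b,b,b'] \<in> B" using T3_A T3_B q by auto
    then show "T [b,x,b'] \<in> B" using s(2) \<open>b' \<in> B\<close> unfolding T_def absorb_def by simp
  qed
  have "e = (\<lambda>k. T [a k, a k, c k], \<lambda>k. T [a k, c k, c k])"
    using s(3) unfolding T_def using T3_idem[OF q] cA by simp
  then show "e \<in> Dv a c" unfolding Dv_def using TT Tabs by blast
qed

lemma Dv_compat:
  assumes "(u, v) \<in> (Dv a c)\<^sup>*" and r: "r \<in> T3"
  shows "(\<lambda>k. r [a k, a k, u k], \<lambda>k. r [a k, a k, v k]) \<in> (Dv a c)\<^sup>*"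
  using assms(1)
proof (induction rule: rtrancl_induct)
  case base then show ?case by simp
next
  case (step v w)
  from step(2) obtain s where s: "s \<in> T3" "absorb s"
    "v = (\<lambda>k. s [a k, a k, c k])" "w = (\<lambda>k. s [a k, c k, c k])"
    unfolding Dv_def by blast
  define T where "T = comp3 r (pr 0) (pr 0) s"
  have TT: "T \<in> T3" unfolding T_def using s r by (intro comp3_T3 prT) auto
  have Tabs: "absorb T" unfolding absorb_def
  proof (intro ballI)
    fix b x b' assume "b \<in> B" "x \<in> A" "b' \<in> B"
    then have "s [b,x,b'] \<in> B" using s(2) unfolding absorb_def by auto
    then show "T [b,x,b'] \<in> B" using T3_B r \<open>b \<in> B\<close> unfolding T_def by simp
  qed
  have "(\<lambda>k. r [a k, a k, v k], \<lambda>k. r [a k, a k, w k]) \<in> Dv a c"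
    unfolding Dv_def using TT Tabs s(3,4) unfolding T_def by (auto intro!: exI[of _ "comp3 r (pr 0) (pr 0) s"])
  then show ?case by (rule rtrancl_into_rtrancl[OF step(3)])
qed

lemma Sg1_sub: "al \<in> A \<Longrightarrow> ga \<in> A \<Longrightarrow> Sg1 al ga \<subseteq> A"
  unfolding Sg1_def using T3_A by auto

lemma Sg1_fin: "al \<in> A \<Longrightarrow> ga \<in> A \<Longrightarrow> finite (Sg1 al ga)"
  using Sg1_sub finA finite_subset by blast

lemma Sg1_self: "al \<in> A \<Longrightarrow> Sg1 al al = {al}"
  unfolding Sg1_def using T3_idem by (auto intro!: exI[of _ "pr 0"])

lemma Sg1_left: "al \<in> Sg1 al ga" unfolding Sg1_def by (auto intro!: exI[of _ "pr 0"])
lemma Sg1_right: "ga \<in> Sg1 al ga" unfolding Sg1_def by (auto intro!: exI[of _ "pr 2"])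

lemma Sg1_mono1:
  assumes "q \<in> T3" shows "Sg1 al (q [al,al,ga]) \<subseteq> Sg1 al ga"
proof
  fix x assume "x \<in> Sg1 al (q [al,al,ga])"
  then obtain s where s: "s \<in> T3" "x = s [al, al, q [al,al,ga]]" unfolding Sg1_def by blast
  let ?T = "comp3 s (pr 0) (pr 0) (comp3 q (pr 0) (pr 0) (pr 2))"
  have "?T \<in> T3" using s assms by (intro comp3_T3 prT) auto
  moreover have "x = ?T [al,al,ga]" using s by simp
  ultimately show "x \<in> Sg1 al ga" unfolding Sg1_def by blast
qed

lemma Sg1_mono2:
  assumes "q \<in> T3" shows "Sg1 (q [al,al,ga]) ga \<subseteq> Sg1 al ga"
proof
  fix x assume "x \<in> Sg1 (q [al,al,ga]) ga"
  then obtain s where s: "s \<in> T3" "x = s [q [al,al,ga], q [al,al,ga], ga]" unfolding Sg1_def by blast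
  let ?T = "comp3 s (comp3 q (pr 0) (pr 0) (pr 2)) (comp3 q (pr 0) (pr 0) (pr 2)) (pr 2)"
  have "?T \<in> T3" using s assms by (intro comp3_T3 prT) auto
  moreover have "x = ?T [al,al,ga]" using s by simp
  ultimately show "x \<in> Sg1 al ga" unfolding Sg1_def by blast
qed

end

lemma rtrancl_cross:
  assumes "(x, y) \<in> r\<^sup>*" "P x" "\<not> P y"
  shows "\<exists>u v. (u, v) \<in> r \<and> P u \<and> \<not> P v"
  using assms
proof (induction rule: rtrancl_induct)
  case base then show ?case by simp
next
  case (step y z)
  then show ?case by (cases "P y") auto
qed


context js
begin

lemma G:
  assumes finI: "finite I" and H1: "\<forall>al\<in>A. \<forall>ga\<in>A. (al, ga) \<in> (Dabs1 al ga)\<^sup>*"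
  shows "(\<forall>k. a k \<in> A) \<Longrightarrow> (\<forall>k. c k \<in> A) \<Longrightarrow> (\<forall>k. k \<notin> I \<longrightarrow> a k = c k) \<Longrightarrow>
    (a, c) \<in> (Dv a c)\<^sup>*"
proof (induction "\<Sum>k\<in>I. card (Sg1 (a k) (c k))" arbitrary: a c rule: less_induct)
  case less
  note aA = less.prems(1) and cA = less.prems(2) and out = less.prems(3)
  show ?case
  proof (cases "a = c")
    case True then show ?thesis by simp
  next
    case False
    then obtain i where i: "i \<in> I" "a i \<noteq> c i" using out by (auto simp: fun_eq_iff)
    define al where "al = a i"
    define ga where "ga = c i"
    have alA: "al \<in> A" and gaA: "ga \<in> A" using aA cA al_def ga_def by auto
    have neq: "al \<noteq> ga" using i al_def ga_def by simp
    have path: "(al, ga) \<in> (Dabs1 al ga)\<^sup>*" using H1 alA gaA by blast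
    have P1: "ga \<notin> Sg1 al al" using Sg1_self[OF alA] neq by auto
    have P2: "\<not> (ga \<notin> Sg1 al ga)" using Sg1_right by auto
    obtain w w' where ww: "(w, w') \<in> Dabs1 al ga" "ga \<notin> Sg1 al w" "ga \<in> Sg1 al w'"
      using rtrancl_cross[of al ga "Dabs1 al ga" "\<lambda>w. ga \<notin> Sg1 al w", OF path P1 P2] by blast
    then obtain t where t: "t \<in> T3" "absorb t" "w = t [al,al,ga]" "w' = t [al,ga,ga]"
      unfolding Dabs1_def by blast
    define g where "g = (\<lambda>k. t [a k, a k, c k])"
    define h where "h = (\<lambda>k. t [a k, c k, c k])"
    have gh: "(g, h) \<in> Dv a c" unfolding Dv_def g_def h_def using t by blast
    have gA: "\<forall>k. g k \<in> A" unfolding g_def using T3_A t aA cA by auto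
    have hA: "\<forall>k. h k \<in> A" unfolding h_def using T3_A t aA cA by auto
    have gout: "\<forall>k. k \<notin> I \<longrightarrow> a k = g k" unfolding g_def using out T3_idem[OF t(1)] cA by auto
    have lt1: "(\<Sum>k\<in>I. card (Sg1 (a k) (g k))) < (\<Sum>k\<in>I. card (Sg1 (a k) (c k)))"
    proof (rule sum_strict_mono_ex1[OF finI])
      show "\<forall>k\<in>I. card (Sg1 (a k) (g k)) \<le> card (Sg1 (a k) (c k))"
        unfolding g_def using Sg1_mono1[OF t(1)] Sg1_fin aA cA by (metis card_mono)
      have "Sg1 al (g i) \<subset> Sg1 al ga"
        using Sg1_mono1[OF t(1)] ww(2) Sg1_right t(3) unfolding g_def al_def ga_def by blast
      then have "card (Sg1 (a i) (g i)) < card (Sg1 (a i) (c i))"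
        using Sg1_fin alA gaA unfolding al_def ga_def by (auto intro: psubset_card_mono)
      then show "\<exists>k\<in>I. card (Sg1 (a k) (g k)) < card (Sg1 (a k) (c k))" using i by blast
    qed
    have "(a, g) \<in> (Dv a g)\<^sup>*" using less.hyps[OF lt1] aA gA gout by blast
    moreover have "Dv a g \<subseteq> Dv a c" unfolding g_def by (rule Dv_T1[OF t(1) aA cA])
    ultimately have ag: "(a, g) \<in> (Dv a c)\<^sup>*" using rtrancl_mono by blast
    have ah: "(a, h) \<in> (Dv a c)\<^sup>*" using ag gh by (rule rtrancl_into_rtrancl)
    obtain r where r: "r \<in> T3" "ga = r [al, al, w']" using ww(3) unfolding Sg1_def by blast
    define e where "e = (\<lambda>k. r [a k, a k, h k])"
    have "(\<lambda>k. r [a k, a k, a k], e) \<in> (Dv a c)\<^sup>*" unfolding e_def by (rule Dv_compat[OF ah r(1)])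
    moreover have "(\<lambda>k. r [a k, a k, a k]) = a" using T3_idem[OF r(1)] aA by auto
    ultimately have ae: "(a, e) \<in> (Dv a c)\<^sup>*" by simp
    define q where "q = comp3 r (pr 0) (pr 0) (comp3 t (pr 0) (pr 2) (pr 2))"
    have qT: "q \<in> T3" unfolding q_def using r t by (intro comp3_T3 prT) auto
    have eq: "e = (\<lambda>k. q [a k, a k, c k])" unfolding e_def h_def q_def by simp
    have eA: "\<forall>k. e k \<in> A" unfolding eq using T3_A qT aA cA by auto
    have eout: "\<forall>k. k \<notin> I \<longrightarrow> e k = c k" unfolding eq using out T3_idem[OF qT] cA by auto
    have ei: "e i = ga" unfolding e_def h_def using r(2) t(4) al_def ga_def by simp
    have lt2: "(\<Sum>k\<in>I. card (Sg1 (e k) (c k))) < (\<Sum>k\<in>I. card (Sg1 (a k) (c k)))"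
    proof (rule sum_strict_mono_ex1[OF finI])
      show "\<forall>k\<in>I. card (Sg1 (e k) (c k)) \<le> card (Sg1 (a k) (c k))"
        unfolding eq using Sg1_mono2[OF qT] Sg1_fin aA cA by (metis card_mono)
      have "{al, ga} \<subseteq> Sg1 al ga" using Sg1_left Sg1_right by auto
      then have "card {al, ga} \<le> card (Sg1 al ga)" using Sg1_fin alA gaA by (auto intro: card_mono)
      then have "1 < card (Sg1 al ga)" using neq by simp
      then have "card (Sg1 (e i) (c i)) < card (Sg1 (a i) (c i))"
        using ei Sg1_self gaA unfolding al_def ga_def by simp
      then show "\<exists>k\<in>I. card (Sg1 (e k) (c k)) < card (Sg1 (a k) (c k))" using i by blast
    qed
    have "(e, c) \<in> (Dv e c)\<^sup>*" using less.hyps[OF lt2] eA cA eout by blast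
    moreover have "Dv e c \<subseteq> Dv a c" unfolding eq by (rule Dv_T2[OF qT aA cA])
    ultimately have ec: "(e, c) \<in> (Dv a c)\<^sup>*" using rtrancl_mono by blast
    show ?thesis using ae ec by (rule rtrancl_trans)
  qed
qed

end


lemma terms_in_R:
  assumes sub3: "subuniverse3 A F R" and gen: "\<forall>i<k. (xs ! i, ys ! i, zs ! i) \<in> R"
  shows "t \<in> term_ops F k \<Longrightarrow> (t xs, t ys, t zs) \<in> R"
proof (induction t rule: term_ops.induct)
  case (proj i) then show ?case using gen by simp
next
  case (app n f gs)
  let ?rs = "map (\<lambda>g. (g xs, g ys, g zs)) gs"
  have H: "\<forall>rs. length rs = n \<and> set rs \<subseteq> R \<longrightarrow>
      (f (map fst rs), f (map (fst \<circ> snd) rs), f (map (snd \<circ> snd) rs)) \<in> R"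
    using bspec[OF sub3[unfolded subuniverse3_def, THEN conjunct2] app(1)] by simp
  have "set ?rs \<subseteq> R" using app(3) by auto
  moreover have "length ?rs = n" using app(2) by simp
  ultimately have "(f (map fst ?rs), f (map (fst \<circ> snd) ?rs), f (map (snd \<circ> snd) ?rs)) \<in> R"
    using H by blast
  then show ?case by (simp add: o_def)
qed

context js
begin

lemma Sg3_terms:
  assumes "b1 \<in> A" "b2 \<in> A" "d \<in> A" "x \<in> A" "y \<in> A"
  shows "Sg3 A F {(b1,x,x),(b2,y,y),(d,x,y)} =
    {(t [b1,b2,d], t [x,y,x], t [x,y,y]) | t. t \<in> T3}" (is "?S = ?T")
proof
  show "?T \<subseteq> ?S"
  proof
    fix p assume "p \<in> ?T"
    then obtain t where t: "t \<in> T3" "p = (t [b1,b2,d], t [x,y,x], t [x,y,y])" by blast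
    show "p \<in> ?S" unfolding Sg3_def
    proof
      fix R assume "R \<in> {R. subuniverse3 A F R \<and> {(b1,x,x),(b2,y,y),(d,x,y)} \<subseteq> R}"
      then have R: "subuniverse3 A F R" "(b1,x,x) \<in> R" "(b2,y,y) \<in> R" "(d,x,y) \<in> R" by auto
      have gen: "\<forall>i<3. ([b1,b2,d] ! i, [x,y,x] ! i, [x,y,y] ! i) \<in> R"
      proof (intro allI impI)
        fix i :: nat assume "i < 3"
        then have "i = 0 \<or> i = 1 \<or> i = 2" by auto
        then show "([b1,b2,d] ! i, [x,y,x] ! i, [x,y,y] ! i) \<in> R" using R by auto
      qed
      show "p \<in> R" using terms_in_R[OF R(1) gen t(1)] t(2) by simp
    qed
  qed
next
  have c2: "(f (map fst rs), f (map (fst \<circ> snd) rs), f (map (snd \<circ> snd) rs)) \<in> ?T"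
    if nf: "(n, f) \<in> F" and len: "length rs = n" and rsT: "set rs \<subseteq> ?T" for n f rs
  proof -
    have "\<forall>r\<in>set rs. \<exists>t. t \<in> T3 \<and> r = (t [b1,b2,d], t [x,y,x], t [x,y,y])" using rsT by blast
    then obtain phi where phi: "\<forall>r\<in>set rs. phi r \<in> T3 \<and> r = (phi r [b1,b2,d], phi r [x,y,x], phi r [x,y,y])"
      by (rule bchoice[THEN exE])
    let ?ts = "map phi rs"
    have m1: "map fst rs = map (\<lambda>g. g [b1,b2,d]) ?ts"
      using phi by (auto intro!: map_cong)
    have m2: "map (fst \<circ> snd) rs = map (\<lambda>g. g [x,y,x]) ?ts"
      using phi by (auto intro!: map_cong)
    have m3: "map (snd \<circ> snd) rs = map (\<lambda>g. g [x,y,y]) ?ts"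
      using phi by (auto intro!: map_cong)
    have tt: "(\<lambda>ws. f (map (\<lambda>g. g ws) ?ts)) \<in> T3"
      by (rule term_ops.app[OF nf]) (use len phi in auto)
    show ?thesis
      unfolding m1 m2 m3
      by (rule CollectI, rule exI[of _ "\<lambda>ws. f (map (\<lambda>g. g ws) ?ts)"]) (use tt in simp)
  qed
  have c1: "?T \<subseteq> A \<times> A \<times> A" using T3_A assms by blast
  have Tsub: "subuniverse3 A F ?T"
    unfolding subuniverse3_def using c1 c2 by blast
  have gen: "{(b1,x,x),(b2,y,y),(d,x,y)} \<subseteq> ?T"
  proof -
    have "(b1,x,x) = (pr 0 [b1,b2,d], pr 0 [x,y,x], pr 0 [x,y,y])" by simp
    moreover have "(b2,y,y) = (pr 1 [b1,b2,d], pr 1 [x,y,x], pr 1 [x,y,y])" by simp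
    moreover have "(d,x,y) = (pr 2 [b1,b2,d], pr 2 [x,y,x], pr 2 [x,y,y])" by simp
    ultimately show ?thesis using prT by blast
  qed
  show "?S \<subseteq> ?T" unfolding Sg3_def using Tsub gen by blast
qed

end


context js
begin

lemma chain:
  assumes "(av, v) \<in> (Dv av cv)\<^sup>*" and avcv: "\<And>x y. x \<in> A \<Longrightarrow> y \<in> A \<Longrightarrow> av (x,y) = x \<and> cv (x,y) = y"
  shows "\<exists>n d. (\<forall>j\<le>n. d j \<in> T3 \<and> absorb (d j)) \<and>
    (\<forall>j<n. \<forall>x\<in>A. \<forall>y\<in>A. d j [x,y,y] = d (Suc j) [x,x,y]) \<and>
    (\<forall>x\<in>A. \<forall>y\<in>A. \<forall>z\<in>A. d 0 [x,y,z] = x) \<and>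
    (\<forall>x\<in>A. \<forall>y\<in>A. d n [x,y,y] = v (x,y))"
  using assms(1)
proof (induction rule: rtrancl_induct)
  case base
  have "(\<forall>j\<le>0. pr 0 \<in> T3 \<and> absorb (pr 0)) \<and>
    (\<forall>j<(0::nat). \<forall>x\<in>A. \<forall>y\<in>A. pr 0 [x,y,y] = (pr 0::'a list \<Rightarrow> 'a) [x,x,y]) \<and>
    (\<forall>x\<in>A. \<forall>y\<in>A. \<forall>z\<in>A. (pr 0::'a list \<Rightarrow> 'a) [x,y,z] = x) \<and>
    (\<forall>x\<in>A. \<forall>y\<in>A. (pr 0::'a list \<Rightarrow> 'a) [x,y,y] = av (x,y))"
  proof (intro conjI)
    show "\<forall>j\<le>0. pr 0 \<in> T3 \<and> absorb (pr 0)" using absorb_pr0 by simp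
    show "\<forall>j<(0::nat). \<forall>x\<in>A. \<forall>y\<in>A. pr 0 [x,y,y] = (pr 0::'a list \<Rightarrow> 'a) [x,x,y]" by simp
    show "\<forall>x\<in>A. \<forall>y\<in>A. \<forall>z\<in>A. (pr 0::'a list \<Rightarrow> 'a) [x,y,z] = x" by simp
    show "\<forall>x\<in>A. \<forall>y\<in>A. (pr 0::'a list \<Rightarrow> 'a) [x,y,y] = av (x,y)"
      using avcv by (simp add: Ball_def)
  qed
  then show ?case by (intro exI)
next
  case (step w z)
  from step.IH obtain n d where dd: "(\<forall>j\<le>n. d j \<in> T3 \<and> absorb (d j)) \<and>
    (\<forall>j<n. \<forall>x\<in>A. \<forall>y\<in>A. d j [x,y,y] = d (Suc j) [x,x,y]) \<and>
    (\<forall>x\<in>A. \<forall>y\<in>A. \<forall>z\<in>A. d 0 [x,y,z] = x) \<and>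
    (\<forall>x\<in>A. \<forall>y\<in>A. d n [x,y,y] = w (x,y))" by (elim exE) (rule that)
  note d = dd[THEN conjunct1] dd[THEN conjunct2, THEN conjunct1]
     dd[THEN conjunct2, THEN conjunct2, THEN conjunct1] dd[THEN conjunct2, THEN conjunct2, THEN conjunct2]
  from step(2) obtain t where t: "t \<in> T3" "absorb t"
    "w = (\<lambda>k. t [av k, av k, cv k])" "z = (\<lambda>k. t [av k, cv k, cv k])"
    unfolding Dv_def by blast
  define d' where "d' = d(Suc n := t)"
  have c1: "\<forall>j\<le>Suc n. d' j \<in> T3 \<and> absorb (d' j)"
  proof (intro allI impI)
    fix j assume "j \<le> Suc n"
    then have "j = Suc n \<or> j \<le> n" by auto
    then show "d' j \<in> T3 \<and> absorb (d' j)" using d(1) t(1,2) unfolding d'_def by auto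
  qed
  have c2: "\<forall>j<Suc n. \<forall>x\<in>A. \<forall>y\<in>A. d' j [x,y,y] = d' (Suc j) [x,x,y]"
  proof (intro allI impI ballI)
    fix j x y assume j: "j < Suc n" and xy: "x \<in> A" "y \<in> A"
    show "d' j [x,y,y] = d' (Suc j) [x,x,y]"
    proof (cases "j < n")
      case True
      then have "d' j = d j" "d' (Suc j) = d (Suc j)" unfolding d'_def by auto
      then show ?thesis using d(2) xy True by simp
    next
      case False
      then have jn: "j = n" using j by simp
      have e: "av (x,y) = x" "cv (x,y) = y" using avcv xy by auto
      have "d' j = d n" "d' (Suc j) = t" unfolding d'_def jn by auto
      moreover have "d n [x,y,y] = w (x,y)" using d(4) xy by blast
      ultimately show ?thesis using t(3) e by simp
    qed
  qed
  have c3: "\<forall>x\<in>A. \<forall>y\<in>A. \<forall>z\<in>A. d' 0 [x,y,z] = x" using d(3) unfolding d'_def by simp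
  have c4: "\<forall>x\<in>A. \<forall>y\<in>A. d' (Suc n) [x,y,y] = z (x,y)"
  proof (intro ballI)
    fix x y assume xy: "x \<in> A" "y \<in> A"
    have e: "av (x,y) = x" "cv (x,y) = y" using avcv xy by auto
    show "d' (Suc n) [x,y,y] = z (x,y)" using t(4) e unfolding d'_def by simp
  qed
  show ?case
    apply (rule exI[of _ "Suc n"], rule exI[of _ d'])
    using c1 c2 c3 c4 by (intro conjI) assumption+
qed

end


theorem theorem4p1:
  fixes A :: "'a set" and F :: "'a ops" and B :: "'a set"
  assumes "is_algebra A F" and "finite A" and "idempotent_alg A F"
    and "subuniverse A F B"
  shows "jonsson_absorbs A F B \<longleftrightarrow>
    (\<forall>a\<in>A. \<forall>c\<in>A. \<forall>d\<in>A. \<forall>b1\<in>B. \<forall>b2\<in>B. (a, c) \<in> (edgeE A F B a c d b1 b2)\<^sup>*)"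
proof -
  interpret js A F B using assms by unfold_locales
  show ?thesis
  proof
    assume "jonsson_absorbs A F B"
    then obtain n d where d: "\<forall>i\<le>n. d i \<in> T3"
        "\<forall>i\<le>n. \<forall>b\<in>B. \<forall>a\<in>A. \<forall>b'\<in>B. d i [b, a, b'] \<in> B"
        "\<forall>i<n. \<forall>x\<in>A. \<forall>y\<in>A. d i [x, y, y] = d (Suc i) [x, x, y]"
        "\<forall>x\<in>A. \<forall>y\<in>A. \<forall>z\<in>A. d 0 [x, y, z] = x \<and> d n [x, y, z] = z"
      unfolding jonsson_absorbs_def by (elim exE conjE) (rule that)
    show "\<forall>a\<in>A. \<forall>c\<in>A. \<forall>d\<in>A. \<forall>b1\<in>B. \<forall>b2\<in>B. (a, c) \<in> (edgeE A F B a c d b1 b2)\<^sup>*"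
    proof (intro ballI)
      fix al ga de b1 b2 assume h: "al \<in> A" "ga \<in> A" "de \<in> A" "b1 \<in> B" "b2 \<in> B"
      have b12A: "b1 \<in> A" "b2 \<in> A" using h BA by auto
      have S: "Sg3 A F {(b1,al,al),(b2,ga,ga),(de,al,ga)} =
          {(t [b1,b2,de], t [al,ga,al], t [al,ga,ga]) | t. t \<in> T3}"
        using Sg3_terms b12A h by blast
      have "i \<le> n \<Longrightarrow> (al, d i [al,ga,ga]) \<in> (edgeE A F B al ga de b1 b2)\<^sup>*" for i
      proof (induction i)
        case 0
        then show ?case using d(4) h by simp
      next
        case (Suc i)
        then have IH: "(al, d i [al,ga,ga]) \<in> (edgeE A F B al ga de b1 b2)\<^sup>*" by simp
        have eq: "d i [al,ga,ga] = d (Suc i) [al,al,ga]" using d(3) Suc.prems h by simp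
        have dT: "d (Suc i) \<in> T3" using d(1) Suc.prems by simp
        let ?t = "comp3 (d (Suc i)) (pr 0) (pr 2) (pr 1)"
        have tT: "?t \<in> T3" using dT by (intro comp3_T3 prT) auto
        have "(d (Suc i) [b1,de,b2], d (Suc i) [al,al,ga], d (Suc i) [al,ga,ga]) \<in>
            Sg3 A F {(b1,al,al),(b2,ga,ga),(de,al,ga)}"
          unfolding S by (rule CollectI, rule exI[of _ ?t]) (use tT in simp)
        moreover have "d (Suc i) [b1,de,b2] \<in> B" using d(2) Suc.prems h by simp
        moreover have "d (Suc i) [al,al,ga] \<in> A" "d (Suc i) [al,ga,ga] \<in> A"
          using T3_A dT h by auto
        ultimately have "(d (Suc i) [al,al,ga], d (Suc i) [al,ga,ga]) \<in> edgeE A F B al ga de b1 b2"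
          unfolding edgeE_def by blast
        then show ?case using IH eq by (metis rtrancl_into_rtrancl)
      qed
      then have "(al, d n [al,ga,ga]) \<in> (edgeE A F B al ga de b1 b2)\<^sup>*" by simp
      moreover have "d n [al,ga,ga] = ga" using d(4) h by simp
      ultimately show "(al, ga) \<in> (edgeE A F B al ga de b1 b2)\<^sup>*" by simp
    qed
  next
    assume R: "\<forall>a\<in>A. \<forall>c\<in>A. \<forall>d\<in>A. \<forall>b1\<in>B. \<forall>b2\<in>B. (a, c) \<in> (edgeE A F B a c d b1 b2)\<^sup>*"
    have hyp: "(al, ga) \<in> (DQ [(b1,de,b2)] al ga)\<^sup>*"
      if h: "al \<in> A" "ga \<in> A" "de \<in> A" "b1 \<in> B" "b2 \<in> B" for al ga de b1 b2
    proof -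
      have b12A: "b1 \<in> A" "b2 \<in> A" using h BA by auto
      have S: "Sg3 A F {(b1,al,al),(b2,ga,ga),(de,al,ga)} =
          {(t [b1,b2,de], t [al,ga,al], t [al,ga,ga]) | t. t \<in> T3}"
        using Sg3_terms b12A h by blast
      have "edgeE A F B al ga de b1 b2 \<subseteq> DQ [(b1,de,b2)] al ga"
      proof
        fix p assume "p \<in> edgeE A F B al ga de b1 b2"
        then obtain u v b where p: "p = (u,v)" "b \<in> B" "(b,u,v) \<in> Sg3 A F {(b1,al,al),(b2,ga,ga),(de,al,ga)}"
          unfolding edgeE_def by blast
        then obtain t where t: "t \<in> T3" "b = t [b1,b2,de]" "u = t [al,ga,al]" "v = t [al,ga,ga]"
          unfolding S by blast
        let ?s = "comp3 t (pr 0) (pr 2) (pr 1)"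
        have sT: "?s \<in> T3" using t by (intro comp3_T3 prT) auto
        show "p \<in> DQ [(b1,de,b2)] al ga" unfolding DQ_def p
          by (rule CollectI, rule exI[of _ ?s]) (use sT t p(2) in simp)
      qed
      then show ?thesis using R h rtrancl_mono by blast
    qed
    have finQ: "finite (B \<times> A \<times> B)" using finA BA finite_subset by blast
    obtain QA where QA: "set QA = B \<times> A \<times> B" using finite_list[OF finQ] by blast
    have H1: "\<forall>al\<in>A. \<forall>ga\<in>A. (al, ga) \<in> (Dabs1 al ga)\<^sup>*"
    proof (intro ballI)
      fix al ga assume h: "al \<in> A" "ga \<in> A"
      have "(al, ga) \<in> (DQ QA al ga)\<^sup>*" using M[OF hyp] QA h by blast
      moreover have "DQ QA al ga \<subseteq> Dabs1 al ga"
        unfolding DQ_def Dabs1_def absorb_def QA by fastforce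
      ultimately show "(al, ga) \<in> (Dabs1 al ga)\<^sup>*" using rtrancl_mono by blast
    qed
    show "jonsson_absorbs A F B"
    proof (cases "A = {}")
      case True
      then have "B = {}" using BA by auto
      show ?thesis unfolding jonsson_absorbs_def
        by (rule exI[of _ 0], rule exI[of _ "\<lambda>_. pr 0"]) (use True in simp)
    next
      case False
      then obtain a0 where a0: "a0 \<in> A" by blast
      define av :: "'a \<times> 'a \<Rightarrow> 'a" where "av = (\<lambda>p. if p \<in> A \<times> A then fst p else a0)"
      define cv :: "'a \<times> 'a \<Rightarrow> 'a" where "cv = (\<lambda>p. if p \<in> A \<times> A then snd p else a0)"
      have avA: "\<forall>k. av k \<in> A" and cvA: "\<forall>k. cv k \<in> A" using a0 unfolding av_def cv_def by auto
      have out: "\<forall>k. k \<notin> A \<times> A \<longrightarrow> av k = cv k" unfolding av_def cv_def by auto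
      have finI: "finite (A \<times> A)" using finA by simp
      have path: "(av, cv) \<in> (Dv av cv)\<^sup>*" using G[OF finI H1] avA cvA out by blast
      have avcv: "av (x,y) = x \<and> cv (x,y) = y" if "x \<in> A" "y \<in> A" for x y
        using that unfolding av_def cv_def by simp
      have ex: "\<exists>n d. (\<forall>j\<le>n. d j \<in> T3 \<and> absorb (d j)) \<and>
        (\<forall>j<n. \<forall>x\<in>A. \<forall>y\<in>A. d j [x,y,y] = d (Suc j) [x,x,y]) \<and>
        (\<forall>x\<in>A. \<forall>y\<in>A. \<forall>z\<in>A. d 0 [x,y,z] = x) \<and>
        (\<forall>x\<in>A. \<forall>y\<in>A. d n [x,y,y] = cv (x,y))"
        apply (rule chain[where av=av and cv=cv and v=cv, OF path])
        by (rule avcv)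
      obtain n d where dd: "(\<forall>j\<le>n. d j \<in> T3 \<and> absorb (d j)) \<and>
        (\<forall>j<n. \<forall>x\<in>A. \<forall>y\<in>A. d j [x,y,y] = d (Suc j) [x,x,y]) \<and>
        (\<forall>x\<in>A. \<forall>y\<in>A. \<forall>z\<in>A. d 0 [x,y,z] = x) \<and>
        (\<forall>x\<in>A. \<forall>y\<in>A. d n [x,y,y] = cv (x,y))"
        using ex by (elim exE) (rule that)
      note d = dd[THEN conjunct1] dd[THEN conjunct2, THEN conjunct1]
        dd[THEN conjunct2, THEN conjunct2, THEN conjunct1] dd[THEN conjunct2, THEN conjunct2, THEN conjunct2]
      define d' where "d' = d(Suc n := pr 2)"
      have c1: "\<forall>i\<le>Suc n. d' i \<in> T3 \<and> absorb (d' i)"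
      proof (intro allI impI)
        fix j assume "j \<le> Suc n"
        then have "j = Suc n \<or> j \<le> n" by auto
        then show "d' j \<in> T3 \<and> absorb (d' j)" using d(1) absorb_pr2 unfolding d'_def by auto
      qed
      have c2: "\<forall>i<Suc n. \<forall>x\<in>A. \<forall>y\<in>A. d' i [x, y, y] = d' (Suc i) [x, x, y]"
      proof (intro allI impI ballI)
        fix j x y assume j: "j < Suc n" and xy: "x \<in> A" "y \<in> A"
        show "d' j [x,y,y] = d' (Suc j) [x,x,y]"
        proof (cases "j < n")
          case True
          then have "d' j = d j" "d' (Suc j) = d (Suc j)" unfolding d'_def by auto
          then show ?thesis using d(2) xy True by simp
        next
          case False
          then have jn: "j = n" using j by simp
          have "d' j = d n" "d' (Suc j) = pr 2" unfolding d'_def jn by auto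
          moreover have "d n [x,y,y] = cv (x,y)" using d(4) xy by blast
          ultimately show ?thesis using avcv[OF xy] by simp
        qed
      qed
      have c3: "\<forall>x\<in>A. \<forall>y\<in>A. \<forall>z\<in>A. d' 0 [x, y, z] = x \<and> d' (Suc n) [x, y, z] = z"
        using d(3) unfolding d'_def by simp
      show ?thesis unfolding jonsson_absorbs_def
      proof (rule exI[of _ "Suc n"], rule exI[of _ d'], intro conjI)
        show "\<forall>i\<le>Suc n. d' i \<in> term_ops F 3" using c1 by blast
        show "\<forall>i\<le>Suc n. \<forall>b\<in>B. \<forall>a\<in>A. \<forall>b'\<in>B. d' i [b, a, b'] \<in> B"
          using c1 unfolding absorb_def by blast
        show "\<forall>i<Suc n. \<forall>x\<in>A. \<forall>y\<in>A. d' i [x, y, y] = d' (Suc i) [x, x, y]" by (rule c2)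
        show "\<forall>x\<in>A. \<forall>y\<in>A. \<forall>z\<in>A. d' 0 [x, y, z] = x \<and> d' (Suc n) [x, y, z] = z" by (rule c3)
      qed
    qed
  qed
qed


end
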